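(* Let $d\in\{1,2,3,7,11\}$, let $K=\mathbb{Q}(\sqrt{-d})$ and let $\mathcal{O}_d$ be its ring of integers. Let $\Delta$ be a positive integer which is not of the form $N(\beta)=\beta\bar\beta$ for any $\beta\in\mathcal{O}_d$. For odd $k\ge 1$ define $H_{k,\Delta}:\mathbb{C}\to\mathbb{R}$ by $$H_{k,\Delta}(z)=\sum_{\substack{(a,b,c)\in\mathbb{Z}\times\mathcal{O}_d\times\mathbb{Z}\\ N(b)-ac=\Delta,\ a<0}}\max\left(0,\left(a|z|^2+bz+\bar b\bar z+c\right)^k\right),$$ and put $\alpha_{k,\Delta}=H_{k,\Delta}(0)$. Then: (1) $H_{1,\Delta}(z)=\alpha_{1,\Delta}$ for all $z\in\mathbb{C}$; (2) if $d\in\{1,3,7\}$, then $H_{3,\Delta}(z)=\alpha_{3,\Delta}$ for all $z\in\mathbb{C}$; (3) if $d=3$, then $H_{5,\Delta}(z)=\alpha_{5,\Delta}$ for all $z\in\mathbb{C}$.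
   Context: $N(b)=b\bar b$ is the norm on $K$. Explicitly $\alpha_{k,\Delta}=\sum_{N(b)-ac=\Delta,\ a<0<c}c^k=\sum_{b\in\mathcal{O}_d,\ N(b)<\Delta}\sigma_k(\Delta-N(b))$, where $\sigma_k$ is the sum of $k$-th powers of divisors. *)

theory Defs
  imports "HOL-Analysis.Analysis"
begin

text \<open>Generator of the ring of integers of Q(sqrt(-d)) for squarefree d > 0:
  sqrt(-d) if d is not 3 mod 4, and (1 + sqrt(-d))/2 if d = 3 mod 4.\<close>
definition omega_d :: "nat \<Rightarrow> complex" where
  "omega_d d = (if d mod 4 = 3 then (1 + \<i> * of_real (sqrt (real d))) / 2
                else \<i> * of_real (sqrt (real d)))"

definition O_d :: "nat \<Rightarrow> complex set" where
  "O_d d = {of_int x + of_int y * omega_d d | x y :: int. True}"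

definition normK :: "complex \<Rightarrow> real" where
  "normK b = (cmod b)^2"

definition idx :: "nat \<Rightarrow> int \<Rightarrow> (int \<times> complex \<times> int) set" where
  "idx d \<Delta> = {(a, b, c). b \<in> O_d d \<and> normK b - real_of_int (a * c) = real_of_int \<Delta> \<and> a < 0}"

definition qform :: "int \<times> complex \<times> int \<Rightarrow> complex \<Rightarrow> real" where
  "qform t z = (case t of (a, b, c) \<Rightarrow>
     Re (of_int a * of_real ((cmod z)^2) + b * z + cnj b * cnj z + of_int c))"

text \<open>H_{k,Delta}(z); only finitely many terms are nonzero, so the (infinite) sum of
  nonnegative terms is a finite sum.\<close>
definition H :: "nat \<Rightarrow> nat \<Rightarrow> int \<Rightarrow> complex \<Rightarrow> real" where
  "H d k \<Delta> z = (\<Sum>\<^sub>\<infinity> t \<in> idx d \<Delta>. max 0 ((qform t z) ^ k))"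

definition alpha :: "nat \<Rightarrow> nat \<Rightarrow> int \<Rightarrow> real" where
  "alpha d k \<Delta> = H d k \<Delta> 0"

end

theory Submission imports Defs begin

lemma id_neg1: "(A+X+Y) + (A-X-Y) = 2*(A::complex)"
  by algebra
lemma id_neg3: "(A+X+Y)^3 + (A-X-Y)^3 = 2*A^3 + 12*A*X*Y + 6*A*(X^2 + Y^2::complex)"
  by algebra
lemma id_i3: "(u::complex)*u = -1 \<Longrightarrow> (A+X+Y)^3 + (A+u*X-u*Y)^3 + (A-X-Y)^3 + (A-u*X+u*Y)^3 = 4*A^3 + 24*A*X*Y"
  by algebra
lemma id_z3: "(u::complex)*u = u - 1 \<Longrightarrow> (A+X+Y)^3 + (A+u*X+(1-u)*Y)^3 + (A+(u-1)*X-u*Y)^3 + (A-X-Y)^3 + (A-u*X+(u-1)*Y)^3 + (A+(1-u)*X+u*Y)^3 = 6*A^3 + 36*A*X*Y"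
  by algebra
lemma id_z5: "(u::complex)*u = u - 1 \<Longrightarrow> (A+X+Y)^5 + (A+u*X+(1-u)*Y)^5 + (A+(u-1)*X-u*Y)^5 + (A-X-Y)^5 + (A-u*X+(u-1)*Y)^5 + (A+(1-u)*X+u*Y)^5 = 6*A^5 + 120*A^3*X*Y + 180*A*X^2*Y^2"
  by algebra

locale setting =
  fixes d :: nat and D :: int
  assumes d_cases: "d \<in> {1,2,3,7,11}"
    and Dpos: "D > 0"
    and notnorm: "\<not> (\<exists>\<beta> \<in> O_d d. normK \<beta> = real_of_int D)"
begin

abbreviation "w \<equiv> omega_d d"
abbreviation "Od \<equiv> O_d d"
definition "tw = (if d mod 4 = 3 then 1 else 0::int)"
definition "nw = (if d mod 4 = 3 then (int d + 1) div 4 else int d)"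

lemma w_sq: "w * w = of_int tw * w - of_int nw"
  and w_cnj: "cnj w = of_int tw - w"
  using d_cases
  by (auto simp: omega_d_def complex_eq_iff power2_eq_square tw_def nw_def field_simps)

lemma O_iff: "b \<in> Od \<longleftrightarrow> (\<exists>x y::int. b = of_int x + of_int y * w)"
  by (auto simp: O_d_def)

lemma O_add: assumes "b \<in> Od" "c \<in> Od" shows "b + c \<in> Od"
proof -
  obtain x y where b: "b = of_int x + of_int y * w" using assms(1) O_iff by auto
  obtain x' y' where c: "c = of_int x' + of_int y' * w" using assms(2) O_iff by auto
  show ?thesis unfolding O_iff
    by (rule exI[of _ "x+x'"], rule exI[of _ "y+y'"]) (simp add: b c algebra_simps)
qed

lemma O_uminus: assumes "b \<in> Od" shows "- b \<in> Od"
proof -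
  obtain x y where b: "b = of_int x + of_int y * w" using assms(1) O_iff by auto
  show ?thesis unfolding O_iff
    by (rule exI[of _ "-x"], rule exI[of _ "-y"]) (simp add: b algebra_simps)
qed

lemma O_diff: "b \<in> Od \<Longrightarrow> c \<in> Od \<Longrightarrow> b - c \<in> Od"
  using O_add[OF _ O_uminus] by (metis diff_conv_add_uminus)

lemma O_mult: assumes "b \<in> Od" "c \<in> Od" shows "b * c \<in> Od"
proof -
  obtain x y where b: "b = of_int x + of_int y * w" using assms(1) O_iff by auto
  obtain x' y' where c: "c = of_int x' + of_int y' * w" using assms(2) O_iff by auto
  have "b * c = of_int x * of_int x' + (of_int x * of_int y' + of_int x' * of_int y) * w + of_int y * of_int y' * (w * w)"
    by (simp add: b c algebra_simps)
  also have "\<dots> = of_int (x*x' - nw*y*y') + of_int (x*y' + x'*y + tw*y*y') * w"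
    by (simp add: w_sq algebra_simps)
  finally show ?thesis unfolding O_iff by blast
qed

lemma O_cnj: assumes "b \<in> Od" shows "cnj b \<in> Od"
proof -
  obtain x y where b: "b = of_int x + of_int y * w" using assms(1) O_iff by auto
  show ?thesis unfolding O_iff
    by (rule exI[of _ "x + tw*y"], rule exI[of _ "-y"]) (simp add: b w_cnj algebra_simps)
qed

lemma O_int: "of_int m \<in> Od"
  unfolding O_iff by (rule exI[of _ m], rule exI[of _ 0]) simp

lemma O_w: "w \<in> Od"
  unfolding O_iff by (rule exI[of _ 0], rule exI[of _ 1]) simp

lemma O_norm_int: assumes "b \<in> Od" shows "\<exists>m::int. b * cnj b = of_int m"
proof -
  obtain x y where b: "b = of_int x + of_int y * w" using assms(1) O_iff by auto
  have "b * cnj b = (of_int x + of_int y * w) * (of_int x + of_int y * (of_int tw - w))"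
    by (simp add: b w_cnj)
  also have "\<dots> = of_int x * of_int x + of_int tw * of_int x * of_int y + of_int y * of_int y * (of_int tw * w - w * w)"
    by (simp add: algebra_simps)
  also have "\<dots> = of_int (x*x + tw*x*y + nw*y*y)"
    by (simp add: w_sq)
  finally show ?thesis by blast
qed

lemma O_trace_int: assumes "b \<in> Od" shows "\<exists>m::int. b + cnj b = of_int m"
proof -
  obtain x y where b: "b = of_int x + of_int y * w" using assms(1) O_iff by auto
  show ?thesis
    by (rule exI[of _ "2*x + tw*y"]) (simp add: b w_cnj algebra_simps)
qed

lemma normK_c: "complex_of_real (normK b) = b * cnj b"
  unfolding normK_def by (rule complex_norm_square)

definition qc :: "int \<times> complex \<times> int \<Rightarrow> complex \<Rightarrow> complex" where
  "qc t z = (case t of (a,b,c) \<Rightarrow> of_int a * (z * cnj z) + b * z + cnj b * cnj z + of_int c)"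

lemma qform_c: "complex_of_real (qform t z) = qc t z"
proof -
  obtain a b c where t: "t = (a,b,c)" by (cases t) auto
  have e: "of_int a * complex_of_real ((cmod z)\<^sup>2) + b * z + cnj b * cnj z + of_int c
      = of_int a * (z * cnj z) + (b * z + cnj (b * z)) + of_int c"
    by (simp only: complex_norm_square) simp
  have "Im (of_int a * (z * cnj z) + (b * z + cnj (b * z)) + of_int c) = 0"
    by (simp add: complex_mult_cnj)
  then show ?thesis unfolding qform_def qc_def t using e
    by (simp add: complex_eq_iff)
qed

lemma qform_eqI: "qc t z = qc s v \<Longrightarrow> qform t z = qform s v"
  by (metis qform_c of_real_eq_iff)

lemma qform_eq_cI: "qc t z = of_real r \<Longrightarrow> qform t z = r"
  by (metis qform_c of_real_eq_iff)

definition trT :: "complex \<Rightarrow> int \<times> complex \<times> int \<Rightarrow> int \<times> complex \<times> int" where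
  "trT \<beta> t = (case t of (a,b,c) \<Rightarrow> (a, b + of_int a * cnj \<beta>, \<lfloor>qform (a,b,c) \<beta>\<rfloor>))"

definition sS :: "int \<times> complex \<times> int \<Rightarrow> int \<times> complex \<times> int" where
  "sS t = (case t of (a,b,c) \<Rightarrow> (c, - cnj b, a))"

definition gI :: "int \<times> complex \<times> int \<Rightarrow> int \<times> complex \<times> int" where
  "gI t = (case t of (a,b,c) \<Rightarrow> (-c, cnj b, -a))"

lemma qform_int:
  assumes "b \<in> Od" "\<beta> \<in> Od"
  shows "of_int \<lfloor>qform (a,b,c) \<beta>\<rfloor> = qform (a,b,c) \<beta>"
proof -
  obtain m1 where m1: "\<beta> * cnj \<beta> = of_int m1" using O_norm_int[OF assms(2)] by auto
  obtain m2 where m2: "b * \<beta> + cnj (b * \<beta>) = of_int m2" using O_trace_int[OF O_mult[OF assms]] by auto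
  have "qc (a,b,c) \<beta> = of_real (of_int (a*m1 + m2 + c))"
    unfolding qc_def using m1 m2 by (simp add: algebra_simps)
  then have "qform (a,b,c) \<beta> = of_int (a*m1 + m2 + c)" by (rule qform_eq_cI)
  then show ?thesis by simp
qed

lemma qc_trT:
  assumes "b \<in> Od" "\<beta> \<in> Od"
  shows "qc (trT \<beta> (a,b,c)) z = qc (a,b,c) (z + \<beta>)"
proof -
  have "complex_of_int \<lfloor>qform (a,b,c) \<beta>\<rfloor> = qc (a,b,c) \<beta>"
    using qform_int[OF assms, of a c] qform_c
    by (metis of_real_of_int_eq)
  then show ?thesis
    unfolding trT_def qc_def by (simp add: algebra_simps)
qed

lemma qform_trT:
  assumes "b \<in> Od" "\<beta> \<in> Od"
  shows "qform (trT \<beta> (a,b,c)) z = qform (a,b,c) (z + \<beta>)"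
  by (rule qform_eqI[OF qc_trT[OF assms]])

lemma qc_sS:
  assumes "z \<noteq> 0"
  shows "qc (sS t) z = (z * cnj z) * qc t (-1/z)"
  using assms unfolding qc_def sS_def
  by (cases t) (simp add: field_simps)

lemma qform_sS:
  assumes "z \<noteq> 0"
  shows "qform (sS t) z = (cmod z)^2 * qform t (-1/z)"
  using qc_sS[OF assms, of t]
  by (metis complex_norm_square of_real_mult qform_c of_real_eq_iff)

lemma qform_gI: "qform (gI t) z = - qform (sS t) z"
  by (cases t) (simp add: qform_def gI_def sS_def)

lemma idx_iff: "(a,b,c) \<in> idx d D \<longleftrightarrow> b \<in> Od \<and> b * cnj b - of_int a * of_int c = of_int D \<and> a < 0"
proof -
  have "normK b - real_of_int (a * c) = real_of_int D \<longleftrightarrow>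
        complex_of_real (normK b - real_of_int (a * c)) = complex_of_real (real_of_int D)"
    by (rule of_real_eq_iff[symmetric])
  also have "\<dots> \<longleftrightarrow> b * cnj b - of_int a * of_int c = of_int D"
    by (simp add: normK_c)
  finally show ?thesis unfolding idx_def by auto
qed

lemma idx_ac_nz:
  assumes "(a,b,c) \<in> idx d D" shows "a \<noteq> 0" "c \<noteq> 0"
proof -
  have b: "b \<in> Od" and e: "normK b - real_of_int (a * c) = real_of_int D" and a: "a < 0"
    using assms unfolding idx_def by auto
  show "a \<noteq> 0" using a by simp
  show "c \<noteq> 0"
  proof
    assume "c = 0"
    then have "normK b = real_of_int D" using e by simp
    then show False using notnorm b by blast
  qed
qed

lemma Re_w: "Re w = of_int tw / 2"
  using d_cases by (auto simp: omega_d_def tw_def)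

lemma Im_w_eq: "Im w = (if d mod 4 = 3 then sqrt (real d) / 2 else sqrt (real d))"
  by (simp add: omega_d_def)

lemma Im_w_sq: "(Im w)^2 = (if d mod 4 = 3 then real d / 4 else real d)"
  unfolding Im_w_eq by (simp add: power_divide)

lemma Im_w: "Im w > 0" "(Im w)^2 \<le> 11/4" "(Im w)^2 \<ge> 1/4"
proof -
  have dp: "d > 0" using d_cases by auto
  show "Im w > 0" unfolding Im_w_eq using dp by simp
  show "(Im w)^2 \<le> 11/4" unfolding Im_w_sq using d_cases by auto
  show "(Im w)^2 \<ge> 1/4" unfolding Im_w_sq using d_cases by auto
qed

lemma Im_w_ge: "Im w \<ge> 1/2"
proof -
  have "(1/2)^2 \<le> (Im w)^2" using Im_w(3) by (simp add: power_divide)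
  then show ?thesis by (rule power2_le_imp_le) (use Im_w(1) in simp)
qed

lemma covering: "\<exists>\<beta>\<in>Od. (cmod (z - \<beta>))^2 \<le> 15/16"
proof -
  define y where "y = round (Im z / Im w)"
  define x where "x = round (Re z - of_int y * Re w)"
  define \<beta> where "\<beta> = of_int x + of_int y * w"
  have b: "\<beta> \<in> Od" unfolding O_iff \<beta>_def by blast
  have h1: "\<bar>Im z / Im w - of_int y\<bar> \<le> 1/2" unfolding y_def using of_int_round_abs_le[of "Im z / Im w"] by linarith
  have h2: "\<bar>Re z - of_int y * Re w - of_int x\<bar> \<le> 1/2" unfolding x_def using of_int_round_abs_le[of "Re z - of_int y * Re w"] by linarith
  have "Im (z - \<beta>) = Im w * (Im z / Im w - of_int y)"
    using Im_w(1) by (simp add: \<beta>_def field_simps)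
  then have i: "\<bar>Im (z - \<beta>)\<bar> \<le> Im w / 2"
    using h1 Im_w(1) by (simp add: abs_mult)
  have r: "\<bar>Re (z - \<beta>)\<bar> \<le> 1/2"
    using h2 by (simp add: \<beta>_def algebra_simps)
  have "(Im (z - \<beta>))^2 \<le> (Im w / 2)^2"
    using i by (metis abs_ge_zero power2_abs power_mono)
  moreover have "(Re (z - \<beta>))^2 \<le> (1/2)^2"
    using r by (metis abs_ge_zero power2_abs power_mono)
  ultimately have "(cmod (z - \<beta>))^2 \<le> 1/4 + (Im w)^2 / 4"
    by (simp add: cmod_power2 power_divide)
  also have "\<dots> \<le> 15/16" using Im_w(2) by simp
  finally show ?thesis using b by blast
qed

definition FF where "FF = {t \<in> idx d D. snd (snd t) > 0}"
definition NN where "NN = {t \<in> idx d D. snd (snd t) < 0}"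

lemma idx_split: "idx d D = FF \<union> NN" "FF \<inter> NN = {}"
proof -
  show "idx d D = FF \<union> NN"
    unfolding FF_def NN_def
    using idx_ac_nz(2) by fastforce
  show "FF \<inter> NN = {}" unfolding FF_def NN_def by auto
qed

lemma FF_iff: "(a,b,c) \<in> FF \<longleftrightarrow> b \<in> Od \<and> b * cnj b - of_int a * of_int c = of_int D \<and> a < 0 \<and> c > 0"
  unfolding FF_def using idx_iff by auto

lemma NN_iff: "(a,b,c) \<in> NN \<longleftrightarrow> b \<in> Od \<and> b * cnj b - of_int a * of_int c = of_int D \<and> a < 0 \<and> c < 0"
  unfolding NN_def using idx_iff by auto


lemma qform_le_D:
  assumes "t \<in> idx d D"
  shows "qform t z \<le> of_int D"
proof -
  obtain a b c where t: "t = (a,b,c)" by (cases t) auto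
  have e: "b * cnj b - of_int a * of_int c = of_int D" and a: "a < 0"
    using assms idx_iff t by auto
  have "complex_of_real (- of_int a * qform t z) = - of_int a * qc t z"
    by (simp add: qform_c)
  also have "\<dots> = of_int D - (of_int a * z + cnj b) * cnj (of_int a * z + cnj b)"
    unfolding t qc_def by (simp add: e[symmetric] algebra_simps)
  also have "\<dots> = complex_of_real (of_int D - (cmod (of_int a * z + cnj b))^2)"
    by (simp only: of_real_diff complex_norm_square) simp
  finally have key: "- of_int a * qform t z = of_int D - (cmod (of_int a * z + cnj b))^2"
    using of_real_eq_iff by blast
  have "(cmod (of_int a * z + cnj b))^2 \<ge> 0" by simp
  then have q1: "- of_int a * qform t z \<le> of_int D" using key by linarith
  show ?thesis
  proof (cases "qform t z \<le> 0")
    case True then show ?thesis using Dpos by simp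
  next
    case False
    have "(- of_int a - 1) * qform t z \<ge> 0"
      using False a by (intro mult_nonneg_nonneg) auto
    then have "qform t z \<le> - of_int a * qform t z" by (simp add: algebra_simps)
    then show ?thesis using q1 by linarith
  qed
qed

lemma trT_idx:
  assumes "\<beta> \<in> Od" "t \<in> idx d D"
  shows "trT \<beta> t \<in> idx d D"
proof -
  obtain a b c where t: "t = (a,b,c)" by (cases t) auto
  have b: "b \<in> Od" and e: "b * cnj b - of_int a * of_int c = of_int D" and a: "a < 0"
    using assms idx_iff t by auto
  have fl: "complex_of_int \<lfloor>qform (a,b,c) \<beta>\<rfloor> = qc (a,b,c) \<beta>"
    using qform_int[OF b assms(1), of a c] qform_c by (metis of_real_of_int_eq)
  have b': "b + of_int a * cnj \<beta> \<in> Od"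
    by (intro O_add O_mult O_int O_cnj b assms(1))
  have "(b + of_int a * cnj \<beta>) * cnj (b + of_int a * cnj \<beta>) - of_int a * complex_of_int \<lfloor>qform (a,b,c) \<beta>\<rfloor>
        = b * cnj b - of_int a * of_int c"
    unfolding fl qc_def by (simp add: algebra_simps)
  then show ?thesis using b' e a unfolding t trT_def by (simp add: idx_iff)
qed

lemma qform_zero: "qform (a,b,c) 0 = of_int c"
  by (simp add: qform_def)

lemma trT_inv:
  assumes "\<beta> \<in> Od" "t \<in> idx d D"
  shows "trT (-\<beta>) (trT \<beta> t) = t"
proof -
  obtain a b c where t: "t = (a,b,c)" by (cases t) auto
  have b: "b \<in> Od" using assms idx_iff t by auto
  have mb: "-\<beta> \<in> Od" using O_uminus assms(1) .
  have "qform (trT \<beta> (a,b,c)) (-\<beta>) = of_int c"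
    using qform_trT[OF b assms(1)] qform_zero by simp
  moreover have "trT \<beta> (a,b,c) = (a, b + of_int a * cnj \<beta>, \<lfloor>qform (a,b,c) \<beta>\<rfloor>)"
    by (simp add: trT_def)
  ultimately show ?thesis unfolding t
    by (simp add: trT_def)
qed

lemma trT_bij:
  assumes "\<beta> \<in> Od"
  shows "bij_betw (trT \<beta>) (idx d D) (idx d D)"
proof (rule bij_betw_byWitness[where f'="trT (-\<beta>)"])
  have mb: "-\<beta> \<in> Od" using O_uminus assms(1) .
  show "\<forall>t\<in>idx d D. trT (- \<beta>) (trT \<beta> t) = t" using trT_inv assms by blast
  show "\<forall>t\<in>idx d D. trT \<beta> (trT (- \<beta>) t) = t" using trT_inv[OF mb] by simp
  show "trT \<beta> ` idx d D \<subseteq> idx d D" using trT_idx assms by blast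
  show "trT (- \<beta>) ` idx d D \<subseteq> idx d D" using trT_idx mb by blast
qed

lemma sS_NN: "t \<in> NN \<Longrightarrow> sS t \<in> NN"
  by (cases t) (auto simp: NN_iff sS_def O_uminus O_cnj algebra_simps)

lemma sS_sS: "sS (sS t) = t"
  by (cases t) (simp add: sS_def)

lemma sS_bij: "bij_betw sS NN NN"
  by (rule bij_betw_byWitness[where f'=sS]) (auto simp: sS_sS sS_NN)

lemma gI_FF: "t \<in> FF \<Longrightarrow> gI t \<in> FF"
  by (cases t) (auto simp: FF_iff gI_def O_cnj algebra_simps)

lemma gI_gI: "gI (gI t) = t"
  by (cases t) (simp add: gI_def)

lemma gI_bij: "bij_betw gI FF FF"
  by (rule bij_betw_byWitness[where f'=gI]) (auto simp: gI_gI gI_FF)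

definition bmap :: "(complex \<Rightarrow> complex) \<Rightarrow> int \<times> complex \<times> int \<Rightarrow> int \<times> complex \<times> int" where
  "bmap h t = (case t of (a,b,c) \<Rightarrow> (a, h b, c))"

lemma bmap_bij:
  assumes "\<And>b. b \<in> Od \<Longrightarrow> h b \<in> Od \<and> h b * cnj (h b) = b * cnj b \<and> h' (h b) = b"
      and "\<And>b. b \<in> Od \<Longrightarrow> h' b \<in> Od \<and> h' b * cnj (h' b) = b * cnj b \<and> h (h' b) = b"
  shows "bij_betw (bmap h) FF FF"
proof (rule bij_betw_byWitness[where f'="bmap h'"])
  show "\<forall>t\<in>FF. bmap h' (bmap h t) = t"
    using assms(1) by (auto simp: bmap_def FF_iff)
  show "\<forall>t\<in>FF. bmap h (bmap h' t) = t"
    using assms(2) by (auto simp: bmap_def FF_iff)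
  show "bmap h ` FF \<subseteq> FF"
    using assms(1) by (auto simp: bmap_def FF_iff)
  show "bmap h' ` FF \<subseteq> FF"
    using assms(2) by (auto simp: bmap_def FF_iff)
qed

lemma bneg_bij: "bij_betw (bmap uminus) FF FF"
  by (rule bmap_bij[where h'=uminus]) (auto simp: O_uminus)

lemma bcnj_bij: "bij_betw (bmap cnj) FF FF"
  by (rule bmap_bij[where h'=cnj]) (auto simp: O_cnj)

lemma bunit_bij:
  assumes "u \<in> Od" "u * cnj u = 1"
  shows "bij_betw (bmap (\<lambda>b. u * b)) FF FF"
proof (rule bmap_bij[where h'="\<lambda>b. cnj u * b"])
  have e1: "cnj u * u = 1" using assms(2) by (simp add: mult.commute)
  fix b assume b: "b \<in> Od"
  have "u * b * cnj (u * b) = (u * cnj u) * (b * cnj b)" by (simp add: algebra_simps)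
  moreover have "cnj u * (u * b) = (cnj u * u) * b" by (simp add: algebra_simps)
  ultimately show "u * b \<in> Od \<and> u * b * cnj (u * b) = b * cnj b \<and> cnj u * (u * b) = b"
    using assms b O_mult e1 by simp
  have "cnj u * b * cnj (cnj u * b) = (u * cnj u) * (b * cnj b)" by (simp add: algebra_simps)
  moreover have "u * (cnj u * b) = (u * cnj u) * b" by (simp add: algebra_simps)
  ultimately show "cnj u * b \<in> Od \<and> cnj u * b * cnj (cnj u * b) = b * cnj b \<and> u * (cnj u * b) = b"
    using assms b O_mult O_cnj by simp
qed

lemma Bset_finite: "finite {b \<in> Od. normK b \<le> of_int D}"
proof -
  let ?S = "(\<lambda>(x,y). of_int x + of_int y * w) ` ({-2*D..2*D} \<times> {-2*D..2*D})"
  have "{b \<in> Od. normK b \<le> of_int D} \<subseteq> ?S"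
  proof
    fix b assume "b \<in> {b \<in> Od. normK b \<le> of_int D}"
    then have b: "b \<in> Od" and n: "(cmod b)^2 \<le> of_int D" by (auto simp: normK_def)
    obtain x y where xy: "b = of_int x + of_int y * w" using b O_iff by auto
    have D1: "(1::real) \<le> of_int D" using Dpos by simp
    have "(1::real) * of_int D \<le> of_int D * of_int D" by (rule mult_right_mono) (use D1 in auto)
    then have "of_int D \<le> (of_int D::real)^2" by (simp add: power2_eq_square)
    then have "(cmod b)^2 \<le> (of_int D)^2" using n by linarith
    then have cb: "cmod b \<le> of_int D" by (rule power2_le_imp_le) (use Dpos in simp)
    have imb: "Im b = of_int y * Im w" using xy by simp
    have "\<bar>of_int y\<bar> * Im w \<le> cmod b" using imb abs_Im_le_cmod[of b] Im_w(1)
      by (simp add: abs_mult)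
    moreover have "\<bar>of_int y\<bar> * (1/2) \<le> \<bar>of_int y\<bar> * Im w"
      using Im_w_ge by (intro mult_left_mono) auto
    ultimately have yb: "\<bar>real_of_int y\<bar> \<le> 2 * cmod b" by linarith
    have reb: "Re b = of_int x + of_int y * (of_int tw / 2)" using xy Re_w by simp
    have tw01: "tw = 0 \<or> tw = 1" by (simp add: tw_def)
    have "\<bar>of_int y * (of_int tw / 2)\<bar> \<le> \<bar>real_of_int y\<bar> / 2" using tw01 by auto
    then have "\<bar>real_of_int x\<bar> \<le> cmod b + \<bar>real_of_int y\<bar> / 2"
      using reb abs_Re_le_cmod[of b] by linarith
    then have xb: "\<bar>real_of_int x\<bar> \<le> 2 * cmod b" using yb by linarith
    have "\<bar>x\<bar> \<le> 2 * D" using xb cb by linarith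
    moreover have "\<bar>y\<bar> \<le> 2 * D" using yb cb by linarith
    ultimately show "b \<in> ?S" using xy by (auto intro!: image_eqI[of _ _ "(x,y)"])
  qed
  moreover have "finite ?S" by simp
  ultimately show ?thesis using finite_subset by blast
qed

lemma FF_bounds:
  assumes "(a,b,c) \<in> FF"
  shows "-D \<le> a \<and> a \<le> -1 \<and> 1 \<le> c \<and> c \<le> D \<and> b \<in> Od \<and> normK b \<le> of_int D"
proof -
  have t: "(a,b,c) \<in> idx d D" and c: "c > 0" using assms by (auto simp: FF_def)
  have b: "b \<in> Od" and e: "normK b - real_of_int (a * c) = real_of_int D" and a: "a < 0"
    using t unfolding idx_def by auto
  have nn: "normK b \<ge> 0" by (simp add: normK_def)
  have "real_of_int (- a * c) \<le> of_int D" using e nn by simp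
  then have ac: "- a * c \<le> D" by linarith
  have "-a \<le> -a * c"
  proof -
    have "0 \<le> (-a) * (c - 1)" by (rule mult_nonneg_nonneg) (use c a in auto)
    then show ?thesis by (simp add: algebra_simps)
  qed
  moreover have "c \<le> -a * c"
  proof -
    have "0 \<le> (-a - 1) * c" using c a by simp
    then show ?thesis by (simp add: algebra_simps)
  qed
  moreover have "normK b \<le> of_int D"
  proof -
    have "real_of_int (a * c) < 0" using a c by (simp add: mult_neg_pos)
    then show ?thesis using e by linarith
  qed
  ultimately show ?thesis using ac a c b by linarith
qed

lemma FF_finite: "finite FF"
proof -
  have "FF \<subseteq> {-D..-1} \<times> {b \<in> Od. normK b \<le> of_int D} \<times> {1..D}"
    using FF_bounds by auto
  moreover have "finite ({-D..-1} \<times> {b \<in> Od. normK b \<le> of_int D} \<times> {1..D})"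
    using Bset_finite by simp
  ultimately show ?thesis by (rule finite_subset)
qed

lemma odd_pow_nonpos: "odd k \<Longrightarrow> x \<le> 0 \<Longrightarrow> x ^ k \<le> (0::real)"
proof -
  assume k: "odd k" and x: "x \<le> 0"
  show ?thesis
  proof (cases "x = 0")
    case True then show ?thesis using k by (cases k) auto
  next
    case False then have "x < 0" using x by simp
    then have "\<not> 0 \<le> x ^ k" using zero_le_odd_power[OF k, of x] by simp
    then show ?thesis by simp
  qed
qed

definition fk :: "nat \<Rightarrow> complex \<Rightarrow> int \<times> complex \<times> int \<Rightarrow> real" where
  "fk k z t = max 0 ((qform t z)^k)"

lemma fk_nonneg: "fk k z t \<ge> 0" by (simp add: fk_def)

lemma fk_le:
  assumes "odd k" "t \<in> idx d D"
  shows "fk k z t \<le> of_int D ^ k"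
proof (cases "qform t z \<le> 0")
  case True
  then have "(qform t z)^k \<le> 0" using assms(1) by (simp add: odd_pow_nonpos)  
  then show ?thesis using Dpos by (simp add: fk_def)
next
  case False
  then have "(qform t z)^k \<le> of_int D ^ k" using qform_le_D[OF assms(2)]
    by (intro power_mono) auto
  then show ?thesis using Dpos by (simp add: fk_def)
qed

lemma fk_pos_iff:
  assumes "odd k"
  shows "fk k z t = (if qform t z > 0 then (qform t z)^k else 0)"
proof (cases "qform t z > 0")
  case True then show ?thesis by (simp add: fk_def)
next
  case False
  then have "(qform t z)^k \<le> 0" using assms by (simp add: odd_pow_nonpos)  
  then show ?thesis using False by (simp add: fk_def)
qed

lemma fk_trT:
  assumes "\<beta> \<in> Od" "t \<in> idx d D"
  shows "fk k z (trT \<beta> t) = fk k (z + \<beta>) t"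
proof -
  obtain a b c where t: "t = (a,b,c)" by (cases t) auto
  have b: "b \<in> Od" using assms idx_iff t by auto
  show ?thesis unfolding fk_def t qform_trT[OF b assms(1)] ..
qed

lemma fk_sS:
  assumes "z \<noteq> 0"
  shows "fk k z (sS t) = (cmod z)^(2*k) * fk k (-1/z) t"
proof -
  have "(qform (sS t) z)^k = (cmod z)^(2*k) * (qform t (-1/z))^k"
    unfolding qform_sS[OF assms] by (simp add: power_mult_distrib power_mult)
  then show ?thesis unfolding fk_def
    by (simp add: max_mult_distrib_left)
qed

definition rho :: real where "rho = 15/16"
definition Cf where "Cf k = real (card FF) * of_int D ^ k"
definition Mb where "Mb k = Cf k / (1 - rho ^ k)"

lemma rho_k: "k > 0 \<Longrightarrow> rho ^ k < 1" "0 \<le> rho ^ k"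
  by (auto simp: rho_def power_less_one_iff)

lemma Mb_eq: "k > 0 \<Longrightarrow> Cf k + rho ^ k * Mb k = Mb k"
proof -
  assume k: "k > 0"
  have "1 - rho ^ k \<noteq> 0" using rho_k(1)[OF k] by simp
  then show ?thesis unfolding Mb_def by (simp add: field_simps)
qed

lemma Mb_nonneg: "k > 0 \<Longrightarrow> Mb k \<ge> 0"
  using rho_k Dpos unfolding Mb_def Cf_def by (simp add: divide_nonneg_pos)

lemma sum_FF_le: "odd k \<Longrightarrow> sum (fk k z) A \<le> Cf k" if "A \<subseteq> FF"
proof -
  assume k: "odd k"
  have "sum (fk k z) A \<le> sum (fk k z) FF"
    by (rule sum_mono2[OF FF_finite that]) (simp add: fk_nonneg)
  also have "\<dots> \<le> real (card FF) * of_int D ^ k"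
    by (rule sum_bounded_above) (use fk_le[OF k] FF_def in auto)
  finally show ?thesis by (simp add: Cf_def)
qed

lemma partial_bound:
  assumes k: "odd k"
  shows "finite X \<Longrightarrow> X \<subseteq> idx d D \<Longrightarrow> (\<forall>t\<in>X. qform t z > of_int D * rho ^ n) \<Longrightarrow> sum (fk k z) X \<le> Mb k"
proof (induction n arbitrary: z X)
  case 0
  have kp: "k > 0" using k by (cases k) auto
  have "X = {}"
  proof (rule ccontr)
    assume "X \<noteq> {}"
    then obtain t where t: "t \<in> X" by auto
    then have "qform t z > of_int D" using 0 by simp
    moreover have "t \<in> idx d D" using 0 t by auto
    then have "qform t z \<le> of_int D" by (rule qform_le_D)
    ultimately show False by simp
  qed
  then show ?case using Mb_nonneg[OF kp] by simp
next
  case (Suc n)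
  have kp: "k > 0" using k by (cases k) auto
  obtain \<beta> where b: "\<beta> \<in> Od" and cz: "(cmod (z - \<beta>))^2 \<le> 15/16" using covering by blast
  define z' where "z' = z - \<beta>"
  have cz': "(cmod z')^2 \<le> rho" using cz by (simp add: z'_def rho_def)
  define X' where "X' = trT \<beta> ` X"
  have inj: "inj_on (trT \<beta>) X"
    using trT_bij[OF b] Suc.prems(2) bij_betw_imp_inj_on inj_on_subset by blast
  have X'sub: "X' \<subseteq> idx d D" using trT_idx[OF b] Suc.prems(2) X'_def by blast
  have finX': "finite X'" using Suc.prems(1) X'_def by simp
  have sumeq: "sum (fk k z) X = sum (fk k z') X'"
    unfolding X'_def sum.reindex[OF inj] o_def
    by (rule sum.cong) (use Suc.prems(2) fk_trT[OF b] z'_def in auto)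
  have qX': "\<forall>t\<in>X'. qform t z' > of_int D * rho ^ Suc n"
  proof
    fix t assume "t \<in> X'"
    then obtain s where s: "s \<in> X" "t = trT \<beta> s" unfolding X'_def by auto
    obtain a b' c where sabc: "s = (a,b',c)" by (cases s) auto
    have b': "b' \<in> Od" using s Suc.prems(2) sabc idx_iff by auto
    have "qform t z' = qform s z" using qform_trT[OF b' b] s sabc z'_def by simp
    then show "qform t z' > of_int D * rho ^ Suc n" using Suc.prems(3) s by auto
  qed
  have spl: "X' = (X' \<inter> FF) \<union> (X' \<inter> NN)" using X'sub idx_split by auto
  have "sum (fk k z') X' = sum (fk k z') (X' \<inter> FF) + sum (fk k z') (X' \<inter> NN)"
    by (subst spl, rule sum.union_disjoint) (use finX' idx_split in auto)
  moreover have s1: "sum (fk k z') (X' \<inter> FF) \<le> Cf k" using sum_FF_le k by simp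
  moreover have s2: "sum (fk k z') (X' \<inter> NN) \<le> rho ^ k * Mb k"
  proof (cases "z' = 0")
    case True
    have "X' \<inter> NN = {}"
    proof (rule ccontr)
      assume "X' \<inter> NN \<noteq> {}"
      then obtain t where t: "t \<in> X'" "t \<in> NN" by auto
      obtain a b' c where tabc: "t = (a,b',c)" by (cases t) auto
      have "c < 0" using t tabc NN_iff by auto
      moreover have "qform t z' > 0"
      proof -
        have "of_int D * rho ^ Suc n > 0" using Dpos by (simp add: rho_def)
        then show ?thesis using qX' t by force
      qed
      ultimately show False using True tabc qform_zero by simp
    qed
    then show ?thesis using Mb_nonneg[OF kp] rho_k by simp
  next
    case False
    define A where "A = X' \<inter> NN"
    define Y where "Y = sS ` A"
    have injA: "inj_on sS A" by (metis inj_on_inverseI sS_sS)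
    have AY: "A = sS ` Y" unfolding Y_def image_image sS_sS by simp
    have injY: "inj_on sS Y" by (metis inj_on_inverseI sS_sS)
    have "sum (fk k z') A = sum (\<lambda>t. fk k z' (sS t)) Y"
      unfolding AY sum.reindex[OF injY] o_def ..
    also have "\<dots> = (cmod z')^(2*k) * sum (fk k (-1/z')) Y"
      unfolding fk_sS[OF False] sum_distrib_left ..
    also have "\<dots> \<le> rho ^ k * Mb k"
    proof (rule mult_mono)
      show "(cmod z')^(2*k) \<le> rho ^ k"
        unfolding power_mult using cz' by (intro power_mono) auto
      show "sum (fk k (-1/z')) Y \<le> Mb k"
      proof (rule Suc.IH)
        show "finite Y" using finX' unfolding Y_def A_def by simp
        show "Y \<subseteq> idx d D" unfolding Y_def A_def using sS_NN idx_split by auto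
        show "\<forall>t\<in>Y. of_int D * rho ^ n < qform t (- 1 / z')"
        proof
          fix t assume "t \<in> Y"
          then have tA: "sS t \<in> A" unfolding Y_def using sS_sS by auto
          have q1: "qform (sS t) z' > of_int D * rho ^ Suc n" using qX' tA A_def by auto
          have q2: "qform (sS t) z' = (cmod z')^2 * qform t (-1/z')" by (rule qform_sS[OF False])
          have cpos: "(cmod z')^2 > 0" using False by simp
          have "of_int D * rho ^ n * (cmod z')^2 \<le> of_int D * rho ^ n * rho"
            using cz' Dpos by (intro mult_left_mono) (auto simp: rho_def)
          also have "\<dots> = of_int D * rho ^ Suc n" by (simp add: algebra_simps)
          also have "\<dots> < (cmod z')^2 * qform t (-1/z')" using q1 q2 by simp
          finally have "(cmod z')^2 * (of_int D * rho ^ n) < (cmod z')^2 * qform t (-1/z')"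
            by (simp add: algebra_simps)
          then show "of_int D * rho ^ n < qform t (- 1 / z')"
            using cpos by (simp add: mult_less_cancel_left_pos)
        qed
      qed
      show "0 \<le> sum (fk k (-1/z')) Y" by (simp add: fk_nonneg sum_nonneg)
      show "0 \<le> rho ^ k" by (simp add: rho_def)
    qed
    finally show ?thesis unfolding A_def .
  qed
  ultimately have "sum (fk k z') X' \<le> Cf k + rho ^ k * Mb k" by linarith
  then show ?case using sumeq Mb_eq[OF kp] by simp
qed

lemma finite_sums_bound:
  assumes k: "odd k" and X: "finite X" "X \<subseteq> idx d D"
  shows "sum (fk k z) X \<le> Mb k"
proof -
  have kp: "k > 0" using k by (cases k) auto
  define X1 where "X1 = {t \<in> X. qform t z > 0}"
  have "sum (fk k z) X = sum (fk k z) X1"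
    unfolding X1_def
    by (rule sum.mono_neutral_right) (use X fk_pos_iff[OF k] in auto)
  also have "\<dots> \<le> Mb k"
  proof (cases "X1 = {}")
    case True then show ?thesis using Mb_nonneg[OF kp] by simp
  next
    case False
    have fin1: "finite X1" using X unfolding X1_def by simp
    define m where "m = Min ((\<lambda>t. qform t z) ` X1)"
    have mpos: "m > 0" unfolding m_def using fin1 False by (subst Min_gr_iff) (auto simp: X1_def)
    obtain n where n: "rho ^ n < m / of_int D"
      using real_arch_pow_inv[of "m / of_int D" rho] mpos Dpos by (auto simp: rho_def)
    have "of_int D * rho ^ n < m" using n Dpos by (simp add: field_simps)
    moreover have "\<forall>t\<in>X1. m \<le> qform t z" unfolding m_def using fin1 by auto
    ultimately have "\<forall>t\<in>X1. qform t z > of_int D * rho ^ n" by fastforce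
    moreover have "X1 \<subseteq> idx d D" using X X1_def by auto
    ultimately show ?thesis using partial_bound[OF k fin1] by blast
  qed
  finally show ?thesis .
qed

lemma fk_summable:
  assumes k: "odd k"
  shows "fk k z summable_on idx d D"
proof (rule nonneg_bdd_above_summable_on)
  show "\<And>x. x \<in> idx d D \<Longrightarrow> 0 \<le> fk k z x" by (simp add: fk_nonneg)
  show "bdd_above (sum (fk k z) ` {F. F \<subseteq> idx d D \<and> finite F})"
    using finite_sums_bound[OF k] by (auto intro!: bdd_aboveI[of _ "Mb k"])
qed

lemma H_bound:
  assumes k: "odd k"
  shows "H d k D z \<le> Mb k" "H d k D z \<ge> 0"
proof -
  have "H d k D z = infsum (fk k z) (idx d D)"
    unfolding H_def fk_def ..
  moreover have "infsum (fk k z) (idx d D) \<le> Mb k"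
    by (rule infsum_le_finite_sums[OF fk_summable[OF k]]) (use finite_sums_bound[OF k] in auto)
  moreover have "infsum (fk k z) (idx d D) \<ge> 0"
    by (rule infsum_nonneg) (simp add: fk_nonneg)
  ultimately show "H d k D z \<le> Mb k" "H d k D z \<ge> 0" by auto
qed

lemma H_eq: "H d k D z = infsum (fk k z) (idx d D)"
  unfolding H_def fk_def ..

lemma H_trans:
  assumes "\<beta> \<in> Od"
  shows "H d k D (z + \<beta>) = H d k D z"
proof -
  have "infsum (fk k (z + \<beta>)) (idx d D) = infsum (\<lambda>t. fk k z (trT \<beta> t)) (idx d D)"
    by (rule infsum_cong) (simp add: fk_trT[OF assms])
  also have "\<dots> = infsum (fk k z) (idx d D)"
    by (rule infsum_reindex_bij_betw[OF trT_bij[OF assms]])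
  finally show ?thesis unfolding H_eq .
qed

lemma H_split:
  assumes k: "odd k"
  shows "H d k D z = sum (fk k z) FF + infsum (fk k z) NN"
proof -
  have s: "fk k z summable_on idx d D" by (rule fk_summable[OF k])
  have "H d k D z = infsum (fk k z) (FF \<union> NN)" unfolding H_eq idx_split(1) ..
  also have "\<dots> = infsum (fk k z) FF + infsum (fk k z) NN"
    by (rule infsum_Un_disjoint)
       (use summable_on_subset_banach[OF s] idx_split in auto)
  finally show ?thesis using FF_finite by simp
qed

lemma NN_S:
  assumes k: "odd k" and z: "z \<noteq> 0"
  shows "infsum (fk k z) NN = (cmod z)^(2*k) * infsum (fk k (-1/z)) NN"
proof -
  have s: "fk k (-1/z) summable_on NN"
    using summable_on_subset_banach[OF fk_summable[OF k]] idx_split by auto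
  have "infsum (fk k z) NN = infsum (\<lambda>t. fk k z (sS t)) NN"
    by (rule infsum_reindex_bij_betw[OF sS_bij, symmetric])
  also have "\<dots> = infsum (\<lambda>t. (cmod z)^(2*k) * fk k (-1/z) t) NN"
    by (simp add: fk_sS[OF z])
  also have "\<dots> = (cmod z)^(2*k) * infsum (fk k (-1/z)) NN"
    by (rule infsum_cmult_right) (use s in auto)
  finally show ?thesis .
qed

definition P :: "nat \<Rightarrow> complex \<Rightarrow> real" where
  "P k z = (\<Sum>t\<in>FF. (qform t z)^k)"

lemma max_odd: "odd k \<Longrightarrow> max 0 (x^k) - max 0 (- (x^k)) = (x::real)^k"
  by (auto simp: max_def)

lemma H_S:
  assumes k: "odd k" and z: "z \<noteq> 0"
  shows "H d k D z - (cmod z)^(2*k) * H d k D (-1/z) = P k z"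
proof -
  have "H d k D z - (cmod z)^(2*k) * H d k D (-1/z)
      = sum (fk k z) FF - (cmod z)^(2*k) * sum (fk k (-1/z)) FF"
    unfolding H_split[OF k, of z] H_split[OF k, of "-1/z"] NN_S[OF k z]
    by (simp add: algebra_simps)
  also have "(cmod z)^(2*k) * sum (fk k (-1/z)) FF = sum (\<lambda>t. fk k z (sS t)) FF"
    unfolding sum_distrib_left fk_sS[OF z] ..
  also have "\<dots> = sum (\<lambda>t. max 0 (- ((qform (gI t) z)^k))) FF"
  proof -
    have "qform (sS t) z = - qform (gI t) z" for t by (simp add: qform_gI)
    then show ?thesis unfolding fk_def using k by (simp add: power_minus_odd)
  qed
  also have "\<dots> = sum (\<lambda>t. max 0 (- ((qform t z)^k))) FF"
    by (rule sum.reindex_bij_betw[OF gI_bij])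
  also have "sum (fk k z) FF - \<dots> = P k z"
    unfolding P_def fk_def sum_subtractf[symmetric] using max_odd[OF k] by simp
  finally show ?thesis .
qed

lemma alpha_P:
  assumes k: "odd k"
  shows "alpha d k D = P k 0"
proof -
  have "infsum (fk k 0) NN = 0"
  proof (rule infsum_0)
    fix t assume "t \<in> NN"
    then obtain a b c where t: "t = (a,b,c)" "c < 0" by (cases t) (auto simp: NN_iff)
    then have "qform t 0 \<le> 0" by (simp add: qform_zero)
    then show "fk k 0 t = 0" using odd_pow_nonpos[OF k] by (simp add: fk_def)
  qed
  moreover have "sum (fk k 0) FF = P k 0"
    unfolding P_def
  proof (rule sum.cong)
    fix t assume "t \<in> FF"
    then obtain a b c where t: "t = (a,b,c)" "c > 0" by (cases t) (auto simp: FF_iff)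
    then have "qform t 0 > 0" by (simp add: qform_zero)
    then show "fk k 0 t = (qform t 0)^k" by (simp add: fk_def)
  qed simp
  ultimately show ?thesis unfolding alpha_def H_split[OF k] by simp
qed

lemma H_const:
  assumes k: "odd k"
    and Pg: "\<And>z. P k z = alpha d k D - alpha d k D * (cmod z)^(2*k)"
  shows "H d k D z = alpha d k D"
proof -
  have kp: "k > 0" using k by (cases k) auto
  define G where "G z = H d k D z - alpha d k D" for z
  have Gb: "\<bar>G z\<bar> \<le> Mb k" for z
    using H_bound[OF k, of z] H_bound[OF k, of 0] unfolding G_def alpha_def by linarith
  have G0: "G 0 = 0" unfolding G_def alpha_def by simp
  have GS: "G z = (cmod z)^(2*k) * G (-1/z)" if "z \<noteq> 0" for z
    using H_S[OF k that] Pg[of z] unfolding G_def by (simp add: algebra_simps)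
  have GT: "G (z + \<beta>) = G z" if "\<beta> \<in> Od" for z \<beta>
    unfolding G_def using H_trans[OF that] by simp
  have iter: "\<bar>G z\<bar> \<le> Mb k * (rho^k)^n" for n z
  proof (induction n arbitrary: z)
    case 0 then show ?case using Gb by simp
  next
    case (Suc n)
    obtain \<beta> where b: "\<beta> \<in> Od" and cz: "(cmod (z - \<beta>))^2 \<le> 15/16" using covering by blast
    define z' where "z' = z - \<beta>"
    have Gz: "G z = G z'" using GT[OF b, of z'] by (simp add: z'_def)
    show ?case
    proof (cases "z' = 0")
      case True
      then show ?thesis using Gz G0 Mb_nonneg[OF kp] rho_k by simp
    next
      case False
      have "\<bar>G z\<bar> = (cmod z')^(2*k) * \<bar>G (-1/z')\<bar>"
        using Gz GS[OF False] by (simp add: abs_mult)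
      also have "\<dots> \<le> rho^k * (Mb k * (rho^k)^n)"
      proof (rule mult_mono)
        show "(cmod z')^(2*k) \<le> rho ^ k"
          unfolding power_mult using cz by (intro power_mono) (auto simp: z'_def rho_def)
      qed (use Suc.IH in \<open>auto simp: rho_def\<close>)
      finally show ?thesis by (simp add: algebra_simps)
    qed
  qed
  have "G z = 0"
  proof (rule ccontr)
    assume "G z \<noteq> 0"
    then have gp: "\<bar>G z\<bar> > 0" by simp
    have mp: "Mb k + 1 > 0" using Mb_nonneg[OF kp] by simp
    obtain n where n: "(rho^k)^n < \<bar>G z\<bar> / (Mb k + 1)"
      using real_arch_pow_inv[of "\<bar>G z\<bar> / (Mb k + 1)" "rho^k"] gp mp rho_k(1)[OF kp] by auto
    have "Mb k * (rho^k)^n \<le> (Mb k + 1) * (rho^k)^n"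
      using rho_k by (intro mult_right_mono) auto
    also have "\<dots> < \<bar>G z\<bar>" using n mp by (simp add: field_simps)
    finally show False using iter[of z n] by simp
  qed
  then show ?thesis unfolding G_def by simp
qed

lemma P_c: "complex_of_real (P k z) = (\<Sum>t\<in>FF. (qc t z)^k)"
  unfolding P_def of_real_sum of_real_power qform_c ..

lemma qc_bmap: "u * cnj u = 1 \<Longrightarrow> qc (bmap (\<lambda>b. u * b) t) z = qc t (u * z)"
proof -
  assume u: "u * cnj u = 1"
  obtain a b c where t: "t = (a,b,c)" by (cases t) auto
  have "of_int a * (u * z * (cnj u * cnj z)) = of_int a * (z * cnj z) * (u * cnj u)"
    by (simp add: algebra_simps)
  then show ?thesis unfolding t bmap_def qc_def using u by (simp add: algebra_simps)
qed

lemma P_unit: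
  assumes "u \<in> Od" "u * cnj u = 1"
  shows "P k (u * z) = P k z"
proof -
  have eq: "qform (bmap (\<lambda>b. u * b) t) z = qform t (u * z)" for t
    by (rule qform_eqI) (simp add: qc_bmap[OF assms(2)])
  have "P k (u * z) = (\<Sum>t\<in>FF. (qform (bmap (\<lambda>b. u * b) t) z)^k)"
    unfolding P_def eq ..
  also have "\<dots> = P k z" unfolding P_def
    by (rule sum.reindex_bij_betw[OF bunit_bij[OF assms]])
  finally show ?thesis .
qed

lemma qc_expand:
  assumes "v * cnj v = 1"
  shows "qc (a,b,c) (v * z) = (of_int a * (z * cnj z) + of_int c) + v * (b * z) + cnj v * (cnj b * cnj z)"
proof -
  have "of_int a * (v * z * (cnj v * cnj z)) = of_int a * (z * cnj z) * (v * cnj v)"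
    by (simp add: algebra_simps)
  then show ?thesis unfolding qc_def using assms by (simp add: algebra_simps)
qed

lemma qc_expand1: "qc (a,b,c) z = (of_int a * (z * cnj z) + of_int c) + (b * z) + (cnj b * cnj z)"
  using qc_expand[of 1 a b c z] by simp

lemma m1_unit: "(-1::complex) \<in> Od" "(-1::complex) * cnj (-1) = 1"
  using O_int[of "-1"] by auto

definition Q3 :: "int \<Rightarrow> int \<Rightarrow> real \<Rightarrow> real \<Rightarrow> real" where
  "Q3 a c N r = (of_int a * r + of_int c)^3 + 6 * (of_int a * r + of_int c) * N * r"

definition Q5 :: "int \<Rightarrow> int \<Rightarrow> real \<Rightarrow> real \<Rightarrow> real" where
  "Q5 a c N r = (of_int a * r + of_int c)^5 + 20 * (of_int a * r + of_int c)^3 * N * r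
     + 30 * (of_int a * r + of_int c) * N^2 * r^2"

lemma Q3_c: "complex_of_real (Q3 a c (normK b) ((cmod z)^2)) =
   (of_int a * (z * cnj z) + of_int c)^3 + 6 * (of_int a * (z * cnj z) + of_int c) * (b * z) * (cnj b * cnj z)"
proof -
  have "complex_of_real (Q3 a c N r) = (of_int a * of_real r + of_int c)^3 + 6 * (of_int a * of_real r + of_int c) * of_real N * of_real r" for N r
    by (simp add: Q3_def)
  note e = this[of "normK b" "(cmod z)^2"]
  show ?thesis unfolding e normK_c complex_norm_square by algebra
qed

lemma Q5_c: "complex_of_real (Q5 a c (normK b) ((cmod z)^2)) =
   (of_int a * (z * cnj z) + of_int c)^5 + 20 * (of_int a * (z * cnj z) + of_int c)^3 * (b * z) * (cnj b * cnj z)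
    + 30 * (of_int a * (z * cnj z) + of_int c) * (b * z)^2 * (cnj b * cnj z)^2"
proof -
  have "complex_of_real (Q5 a c N r) = (of_int a * of_real r + of_int c)^5 + 20 * (of_int a * of_real r + of_int c)^3 * of_real N * of_real r
     + 30 * (of_int a * of_real r + of_int c) * (of_real N)^2 * (of_real r)^2" for N r
    by (simp add: Q5_def)
  note e = this[of "normK b" "(cmod z)^2"]
  show ?thesis unfolding e normK_c complex_norm_square by algebra
qed

lemma P1_radial: "P 1 z = (\<Sum>(a,b,c)\<in>FF. of_int a * (cmod z)^2 + of_int c)"
proof -
  have "P 1 ((-1) * z) = P 1 z" by (rule P_unit[OF m1_unit])
  then have "complex_of_real (2 * P 1 z) = complex_of_real (P 1 z) + complex_of_real (P 1 ((-1) * z))"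
    by simp
  also have "\<dots> = (\<Sum>t\<in>FF. qc t z + qc t ((-1) * z))"
    unfolding P_c sum.distrib by simp
  also have "\<dots> = (\<Sum>t\<in>FF. complex_of_real (2 * (case t of (a,b,c) \<Rightarrow> of_int a * (cmod z)^2 + of_int c)))"
  proof (rule sum.cong)
    fix t assume "t \<in> FF"
    obtain a b c where t: "t = (a,b,c)" by (cases t) auto
    have "qc t z + qc t ((-1) * z) = 2 * (of_int a * (z * cnj z) + of_int c)"
      unfolding t qc_expand1 qc_expand[OF m1_unit(2)] using id_neg1 by simp
    then show "qc t z + qc t ((-1) * z) = complex_of_real (2 * (case t of (a,b,c) \<Rightarrow> of_int a * (cmod z)^2 + of_int c))"
      unfolding t by (simp add: complex_norm_square[symmetric] del: of_real_power)
  qed simp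
  also have "\<dots> = complex_of_real (2 * (\<Sum>(a,b,c)\<in>FF. of_int a * (cmod z)^2 + of_int c))"
    unfolding of_real_sum sum_distrib_left ..
  finally show ?thesis using of_real_eq_iff by fastforce
qed

lemma P3_d1:
  assumes d1: "d = 1"
  shows "P 3 z = (\<Sum>(a,b,c)\<in>FF. Q3 a c (normK b) ((cmod z)^2))"
proof -
  have tn: "tw = 0" "nw = 1" unfolding tw_def nw_def using d1 by simp_all
  have uu: "w * w = -1" and cu: "cnj w = - w" using w_sq w_cnj unfolding tn by auto
  have un1: "w * cnj w = 1" using uu cu by simp
  have un2: "(-w) * cnj (-w) = 1" using uu cu by simp
  have O2: "-w \<in> Od" using O_uminus O_w by blast
  have "complex_of_real (4 * P 3 z) = complex_of_real (P 3 z) + complex_of_real (P 3 (w * z))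
      + complex_of_real (P 3 ((-1) * z)) + complex_of_real (P 3 ((-w) * z))"
    using P_unit[OF O_w un1] P_unit[OF m1_unit] P_unit[OF O2 un2] by simp
  also have "\<dots> = (\<Sum>t\<in>FF. qc t z ^ 3 + qc t (w * z) ^ 3 + qc t ((-1) * z) ^ 3 + qc t ((-w) * z) ^ 3)"
    unfolding P_c sum.distrib ..
  also have "\<dots> = (\<Sum>t\<in>FF. complex_of_real (4 * (case t of (a,b,c) \<Rightarrow> Q3 a c (normK b) ((cmod z)^2))))"
  proof (rule sum.cong)
    fix t assume "t \<in> FF"
    obtain a b c where t: "t = (a,b,c)" by (cases t) auto
    let ?A = "of_int a * (z * cnj z) + of_int c" and ?X = "b * z" and ?Y = "cnj b * cnj z"
    have key: "(A+X+Y)^3 + (A + w*X + cnj w*Y)^3 + (A + (-1)*X + cnj (-1)*Y)^3 + (A + (-w)*X + cnj (-w)*Y)^3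
       = 4*A^3 + 24*A*X*Y" for A X Y
      using id_i3[OF uu, of A X Y] cu by (simp add: algebra_simps)
    have "qc t z ^ 3 + qc t (w * z) ^ 3 + qc t ((-1) * z) ^ 3 + qc t ((-w) * z) ^ 3 = 4*?A^3 + 24*?A*?X*?Y"
      unfolding t qc_expand[OF un1] qc_expand[OF un2] qc_expand[OF m1_unit(2)] unfolding qc_expand1 by (rule key)
    also have "\<dots> = complex_of_real (4 * (case t of (a,b,c) \<Rightarrow> Q3 a c (normK b) ((cmod z)^2)))"
      unfolding t prod.case of_real_mult Q3_c by simp
    finally show "qc t z ^ 3 + qc t (w * z) ^ 3 + qc t ((-1) * z) ^ 3 + qc t ((-w) * z) ^ 3 =
       complex_of_real (4 * (case t of (a,b,c) \<Rightarrow> Q3 a c (normK b) ((cmod z)^2)))" .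
  qed simp
  also have "\<dots> = complex_of_real (4 * (\<Sum>(a,b,c)\<in>FF. Q3 a c (normK b) ((cmod z)^2)))"
    unfolding of_real_sum sum_distrib_left ..
  finally show ?thesis using of_real_eq_iff by fastforce
qed

lemma d3_facts:
  assumes d3: "d = 3"
  shows "w * w = w - 1" "cnj w = 1 - w"
proof -
  have tn: "tw = 1" "nw = 1" unfolding tw_def nw_def using d3 by simp_all
  show "w * w = w - 1" "cnj w = 1 - w" using w_sq w_cnj unfolding tn by auto
qed

lemma P_avg6:
  assumes d3: "d = 3"
  shows "complex_of_real (6 * P k z) = (\<Sum>t\<in>FF. qc t z ^ k + qc t (w * z) ^ k + qc t ((w - 1) * z) ^ k
      + qc t ((-1) * z) ^ k + qc t ((-w) * z) ^ k + qc t ((1 - w) * z) ^ k)"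
proof -
  note f = d3_facts[OF d3]
  have u1: "w * cnj w = 1" unfolding f(2) right_diff_distrib f(1) by simp
  have u2: "(w - 1) * cnj (w - 1) = 1" using f u1 by (simp add: algebra_simps)
  have u3: "(-w) * cnj (-w) = 1" using f u1 by (simp add: algebra_simps)
  have u4: "(1 - w) * cnj (1 - w) = 1" using f u1 by (simp add: algebra_simps)
  have o2: "w - 1 \<in> Od" by (rule O_diff[OF O_w]) (use O_int[of 1] in simp)
  have o3: "-w \<in> Od" by (rule O_uminus[OF O_w])
  have o4: "1 - w \<in> Od" by (rule O_diff[OF _ O_w]) (use O_int[of 1] in simp)
  have "complex_of_real (6 * P k z) = complex_of_real (P k z) + complex_of_real (P k (w * z))
      + complex_of_real (P k ((w - 1) * z)) + complex_of_real (P k ((-1) * z))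
      + complex_of_real (P k ((-w) * z)) + complex_of_real (P k ((1 - w) * z))"
    using P_unit[OF O_w u1] P_unit[OF o2 u2] P_unit[OF m1_unit] P_unit[OF o3 u3] P_unit[OF o4 u4]
    by simp
  also have "\<dots> = (\<Sum>t\<in>FF. qc t z ^ k + qc t (w * z) ^ k + qc t ((w - 1) * z) ^ k
      + qc t ((-1) * z) ^ k + qc t ((-w) * z) ^ k + qc t ((1 - w) * z) ^ k)"
    unfolding P_c sum.distrib ..
  finally show ?thesis .
qed

lemma qc6_expand:
  assumes d3: "d = 3" and that: "A = of_int a * (z * cnj z) + of_int c" "X = b * z" "Y = cnj b * cnj z"
  shows "qc (a,b,c) z ^ k + qc (a,b,c) (w * z) ^ k + qc (a,b,c) ((w - 1) * z) ^ k
      + qc (a,b,c) ((-1) * z) ^ k + qc (a,b,c) ((-w) * z) ^ k + qc (a,b,c) ((1 - w) * z) ^ k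
    = (A+X+Y)^k + (A+w*X+(1-w)*Y)^k + (A+(w-1)*X-w*Y)^k + (A-X-Y)^k + (A-w*X+(w-1)*Y)^k + (A+(1-w)*X+w*Y)^k"
proof -
  note f = d3_facts[OF d3]
  have u1: "w * cnj w = 1" unfolding f(2) right_diff_distrib f(1) by simp
  have u2: "(w - 1) * cnj (w - 1) = 1" using f u1 by (simp add: algebra_simps)
  have u3: "(-w) * cnj (-w) = 1" using f u1 by (simp add: algebra_simps)
  have u4: "(1 - w) * cnj (1 - w) = 1" using f u1 by (simp add: algebra_simps)
  show ?thesis
    unfolding qc_expand[OF u1] qc_expand[OF u2] qc_expand[OF u3] qc_expand[OF u4] qc_expand[OF m1_unit(2)]
    unfolding qc_expand1 that complex_cnj_diff complex_cnj_minus complex_cnj_one f(2)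
    by (simp add: algebra_simps)
qed

lemma P3_d3:
  assumes d3: "d = 3"
  shows "P 3 z = (\<Sum>(a,b,c)\<in>FF. Q3 a c (normK b) ((cmod z)^2))"
proof -
  note f = d3_facts[OF d3]
  have "complex_of_real (6 * P 3 z) = (\<Sum>t\<in>FF. complex_of_real (6 * (case t of (a,b,c) \<Rightarrow> Q3 a c (normK b) ((cmod z)^2))))"
    unfolding P_avg6[OF d3]
  proof (rule sum.cong)
    fix t assume "t \<in> FF"
    obtain a b c where t: "t = (a,b,c)" by (cases t) auto
    let ?A = "of_int a * (z * cnj z) + of_int c" and ?X = "b * z" and ?Y = "cnj b * cnj z"
    show "qc t z ^ 3 + qc t (w * z) ^ 3 + qc t ((w - 1) * z) ^ 3 + qc t ((-1) * z) ^ 3 + qc t ((-w) * z) ^ 3 + qc t ((1 - w) * z) ^ 3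
        = complex_of_real (6 * (case t of (a,b,c) \<Rightarrow> Q3 a c (normK b) ((cmod z)^2)))"
      unfolding t qc6_expand[OF d3 refl refl refl] id_z3[OF f(1)]
      unfolding prod.case of_real_mult Q3_c by simp
  qed simp
  also have "\<dots> = complex_of_real (6 * (\<Sum>(a,b,c)\<in>FF. Q3 a c (normK b) ((cmod z)^2)))"
    unfolding of_real_sum sum_distrib_left ..
  finally show ?thesis using of_real_eq_iff by fastforce
qed

lemma P5_d3:
  assumes d3: "d = 3"
  shows "P 5 z = (\<Sum>(a,b,c)\<in>FF. Q5 a c (normK b) ((cmod z)^2))"
proof -
  note f = d3_facts[OF d3]
  have "complex_of_real (6 * P 5 z) = (\<Sum>t\<in>FF. complex_of_real (6 * (case t of (a,b,c) \<Rightarrow> Q5 a c (normK b) ((cmod z)^2))))"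
    unfolding P_avg6[OF d3]
  proof (rule sum.cong)
    fix t assume "t \<in> FF"
    obtain a b c where t: "t = (a,b,c)" by (cases t) auto
    show "qc t z ^ 5 + qc t (w * z) ^ 5 + qc t ((w - 1) * z) ^ 5 + qc t ((-1) * z) ^ 5 + qc t ((-w) * z) ^ 5 + qc t ((1 - w) * z) ^ 5
        = complex_of_real (6 * (case t of (a,b,c) \<Rightarrow> Q5 a c (normK b) ((cmod z)^2)))"
      unfolding t qc6_expand[OF d3 refl refl refl] id_z5[OF f(1)]
      unfolding prod.case of_real_mult Q5_c by (simp add: algebra_simps)
  qed simp
  also have "\<dots> = complex_of_real (6 * (\<Sum>(a,b,c)\<in>FF. Q5 a c (normK b) ((cmod z)^2)))"
    unfolding of_real_sum sum_distrib_left ..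
  finally show ?thesis using of_real_eq_iff by fastforce
qed

abbreviation "ta t \<equiv> fst t"
abbreviation "tb t \<equiv> fst (snd t)"
abbreviation "tc t \<equiv> snd (snd t)"

lemma sum_gI: "(\<Sum>t\<in>FF. f t) = (\<Sum>t\<in>FF. f (gI t))"
  by (rule sum.reindex_bij_betw[OF gI_bij, symmetric])

lemma gI_proj: "ta (gI t) = - tc t" "tb (gI t) = cnj (tb t)" "tc (gI t) = - ta t"
  by (cases t; simp add: gI_def)+

lemma sum_bcnj: "(\<Sum>t\<in>FF. f t) = (\<Sum>t\<in>FF. f (bmap cnj t))"
  by (rule sum.reindex_bij_betw[OF bcnj_bij, symmetric])

lemma bmap_proj: "ta (bmap h t) = ta t" "tb (bmap h t) = h (tb t)" "tc (bmap h t) = tc t"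
  by (cases t; simp add: bmap_def)+

lemma normK_cnj: "normK (cnj b) = normK b" by (simp add: normK_def)

lemma sum_case3: "(\<Sum>(a,b,c)\<in>FF. f a b c) = (\<Sum>t\<in>FF. f (ta t) (tb t) (tc t))"
  by (rule sum.cong) (auto simp: case_prod_unfold)

lemma sum_a_c: "(\<Sum>t\<in>FF. real_of_int (ta t)) = - (\<Sum>t\<in>FF. real_of_int (tc t))"
  by (subst sum_gI) (simp add: gI_proj sum_negf)

lemma P1_final: "P 1 z = alpha d 1 D - alpha d 1 D * (cmod z)^(2*1)"
proof -
  have "alpha d 1 D = P 1 0" by (rule alpha_P) simp
  then have al: "alpha d 1 D = (\<Sum>t\<in>FF. real_of_int (tc t))"
    unfolding P1_radial sum_case3 by simp
  have "P 1 z = (\<Sum>t\<in>FF. real_of_int (ta t) * (cmod z)^2 + real_of_int (tc t))"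
    unfolding P1_radial sum_case3 ..
  also have "\<dots> = (\<Sum>t\<in>FF. real_of_int (ta t)) * (cmod z)^2 + (\<Sum>t\<in>FF. real_of_int (tc t))"
    by (simp add: sum.distrib sum_distrib_right)
  finally show ?thesis unfolding al sum_a_c by simp
qed

lemma sum_poly3: "(\<Sum>t\<in>S. A t + B t * r + C t * r^2 + E t * r^3) =
   sum A S + sum B S * r + sum C S * r^2 + sum E S * (r::real)^3"
  by (simp add: sum.distrib sum_distrib_right)

definition p31 where "p31 = (\<Sum>t\<in>FF. 3 * of_int (ta t) * of_int (tc t)^2 + 6 * of_int (tc t) * normK (tb t))"

lemma Q3_sum: "(\<Sum>(a,b,c)\<in>FF. Q3 a c (normK b) r)
   = (\<Sum>t\<in>FF. real_of_int (tc t)^3) + p31 * r - p31 * r^2 - (\<Sum>t\<in>FF. real_of_int (tc t)^3) * r^3"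
proof -
  have "(\<Sum>(a,b,c)\<in>FF. Q3 a c (normK b) r) = (\<Sum>t\<in>FF. real_of_int (tc t)^3
      + (3 * of_int (ta t) * of_int (tc t)^2 + 6 * of_int (tc t) * normK (tb t)) * r
      + (3 * of_int (ta t)^2 * of_int (tc t) + 6 * of_int (ta t) * normK (tb t)) * r^2
      + real_of_int (ta t)^3 * r^3)"
    unfolding sum_case3 by (rule sum.cong) (simp_all add: Q3_def power2_eq_square power3_eq_cube algebra_simps)
  also have "\<dots> = (\<Sum>t\<in>FF. real_of_int (tc t)^3) + p31 * r
      + (\<Sum>t\<in>FF. 3 * of_int (ta t)^2 * of_int (tc t) + 6 * of_int (ta t) * normK (tb t)) * r^2
      + (\<Sum>t\<in>FF. real_of_int (ta t)^3) * r^3"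
    unfolding p31_def by (rule sum_poly3)
  also have "(\<Sum>t\<in>FF. 3 * of_int (ta t)^2 * of_int (tc t) + 6 * of_int (ta t) * normK (tb t)) = - p31"
    unfolding p31_def by (subst sum_gI) (simp add: gI_proj normK_cnj sum_negf[symmetric] algebra_simps)
  also have "(\<Sum>t\<in>FF. real_of_int (ta t)^3) = - (\<Sum>t\<in>FF. real_of_int (tc t)^3)"
    by (subst sum_gI) (simp add: gI_proj sum_negf)
  finally show ?thesis by simp
qed

lemma chain_step:
  assumes k: "odd k" and b: "\<beta> \<in> Od" and v: "z + \<beta> = v" "v \<noteq> 0" "v * z' = -1"
  shows "H d k D z = P k v + (cmod v)^(2*k) * H d k D z'"
proof -
  have z': "z' = -1 / v" using v by (simp add: field_simps)
  have "H d k D z = H d k D v" using H_trans[OF b, where z=z and k=k] v by simp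
  then show ?thesis using H_S[OF k v(2)] z' by simp
qed

lemma chain3:
  assumes k: "odd k" and b: "ba \<in> Od" "bb \<in> Od" "bc \<in> Od"
    and c0: "za + ba = va" "va \<noteq> 0" "va * zb = -1"
    and c1: "zb + bb = vb" "vb \<noteq> 0" "vb * zc = -1"
    and c2: "zc + bc = vc" "vc \<noteq> 0" "vc * za = -1"
    and n: "(cmod va)^2 * (cmod vb)^2 * (cmod vc)^2 = 1"
  shows "P k va + ((cmod va)^2)^k * P k vb + ((cmod va)^2 * (cmod vb)^2)^k * P k vc = 0"
proof -
  let ?n0 = "((cmod va)^2)^k" and ?n1 = "((cmod vb)^2)^k" and ?n2 = "((cmod vc)^2)^k"
  have e0: "H d k D za = P k va + ?n0 * H d k D zb" using chain_step[OF k b(1) c0] by (simp add: power_mult)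
  have e1: "H d k D zb = P k vb + ?n1 * H d k D zc" using chain_step[OF k b(2) c1] by (simp add: power_mult)
  have e2: "H d k D zc = P k vc + ?n2 * H d k D za" using chain_step[OF k b(3) c2] by (simp add: power_mult)
  have nn: "?n0 * ?n1 * ?n2 = 1" using n by (simp add: power_mult_distrib[symmetric])
  have "H d k D za = P k va + ?n0 * P k vb + (?n0 * ?n1) * P k vc + (?n0 * ?n1 * ?n2) * H d k D za"
    using e0 e1 e2 by (simp add: algebra_simps)
  then show ?thesis using nn by (simp add: power_mult_distrib)
qed

lemma one_O: "(1::complex) \<in> Od" using O_int[of 1] by simp

lemma ST_2i:
  assumes k: "odd k"
  shows "P k (Complex 1 2) + 5^k * P k (Complex (4/5) (2/5)) + 4^k * P k (Complex 0 (1/2)) = 0"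
proof -
  have "P k (Complex 1 2) + ((cmod (Complex 1 2))^2)^k * P k (Complex (4/5) (2/5))
     + ((cmod (Complex 1 2))^2 * (cmod (Complex (4/5) (2/5)))^2)^k * P k (Complex 0 (1/2)) = 0"
    by (rule chain3[where zb="Complex (-1/5) (2/5)" and zc="Complex (-1) (1/2)" and za="Complex 0 2", OF k one_O one_O one_O])
       (simp_all add: complex_eq_iff cmod_power2 Complex_eq_0 power_divide)
  then show ?thesis by (simp add: cmod_power2 power_divide)
qed

lemma ST_3i:
  assumes k: "odd k"
  shows "P k (Complex 1 3) + 10^k * P k (Complex (9/10) (3/10)) + 9^k * P k (Complex 0 (1/3)) = 0"
proof -
  have "P k (Complex 1 3) + ((cmod (Complex 1 3))^2)^k * P k (Complex (9/10) (3/10))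
     + ((cmod (Complex 1 3))^2 * (cmod (Complex (9/10) (3/10)))^2)^k * P k (Complex 0 (1/3)) = 0"
    by (rule chain3[where zb="Complex (-1/10) (3/10)" and zc="Complex (-1) (1/3)" and za="Complex 0 3", OF k one_O one_O one_O])
       (simp_all add: complex_eq_iff cmod_power2 Complex_eq_0 power_divide)
  then show ?thesis by (simp add: cmod_power2 power_divide)
qed

lemma cm_vals: "(cmod (Complex 1 2))^2 = 5" "(cmod (Complex (4/5) (2/5)))^2 = 4/5" "(cmod (Complex 0 (1/2)))^2 = 1/4"
  "(cmod (Complex 1 3))^2 = 10" "(cmod (Complex (9/10) (3/10)))^2 = 9/10" "(cmod (Complex 0 (1/3)))^2 = 1/9"
  "(cmod 0)^2 = 0"
  unfolding cmod_power2 by (simp_all add: power2_eq_square)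

lemma P3_final_radial:
  assumes rad: "\<And>z. P 3 z = (\<Sum>(a,b,c)\<in>FF. Q3 a c (normK b) ((cmod z)^2))"
  shows "P 3 z = alpha d 3 D - alpha d 3 D * (cmod z)^(2*3)"
proof -
  define al where "al = (\<Sum>t\<in>FF. real_of_int (tc t)^3)"
  have Pf: "P 3 z = al + p31 * (cmod z)^2 - p31 * ((cmod z)^2)^2 - al * ((cmod z)^2)^3" for z
    unfolding rad Q3_sum al_def ..
  have alpha: "alpha d 3 D = al" using alpha_P[of 3] Pf[of 0] by simp
  have "P 3 (Complex 1 2) + 5^3 * P 3 (Complex (4/5) (2/5)) + 4^3 * P 3 (Complex 0 (1/2)) = 0"
    by (rule ST_2i) simp
  then have "p31 = 0" unfolding Pf cm_vals by (simp add: power_divide)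
  then show ?thesis unfolding Pf alpha by (simp add: power_mult)
qed

definition p51 where "p51 = (\<Sum>t\<in>FF. 5 * of_int (ta t) * of_int (tc t)^4 + 20 * of_int (tc t)^3 * normK (tb t))"
definition p52 where "p52 = (\<Sum>t\<in>FF. 10 * of_int (ta t)^2 * of_int (tc t)^3 + 60 * normK (tb t) * of_int (ta t) * of_int (tc t)^2
   + 30 * (normK (tb t))^2 * of_int (tc t))"

lemma sum_poly5: "(\<Sum>t\<in>S. A t + B t * r + C t * r^2 + E t * r^3 + F t * r^4 + G t * r^5) =
   sum A S + sum B S * r + sum C S * r^2 + sum E S * r^3 + sum F S * r^4 + sum G S * (r::real)^5"
  by (simp add: sum.distrib sum_distrib_right)

lemma Q5_sum: "(\<Sum>(a,b,c)\<in>FF. Q5 a c (normK b) r)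
   = (\<Sum>t\<in>FF. real_of_int (tc t)^5) + p51 * r + p52 * r^2 - p52 * r^3 - p51 * r^4 - (\<Sum>t\<in>FF. real_of_int (tc t)^5) * r^5"
proof -
  have "(\<Sum>(a,b,c)\<in>FF. Q5 a c (normK b) r) = (\<Sum>t\<in>FF. real_of_int (tc t)^5
      + (5 * of_int (ta t) * of_int (tc t)^4 + 20 * of_int (tc t)^3 * normK (tb t)) * r
      + (10 * of_int (ta t)^2 * of_int (tc t)^3 + 60 * normK (tb t) * of_int (ta t) * of_int (tc t)^2
         + 30 * (normK (tb t))^2 * of_int (tc t)) * r^2
      + (10 * of_int (ta t)^3 * of_int (tc t)^2 + 60 * normK (tb t) * of_int (ta t)^2 * of_int (tc t)
         + 30 * (normK (tb t))^2 * of_int (ta t)) * r^3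
      + (5 * of_int (ta t)^4 * of_int (tc t) + 20 * normK (tb t) * of_int (ta t)^3) * r^4
      + real_of_int (ta t)^5 * r^5)"
    unfolding sum_case3 by (rule sum.cong[OF refl]) (unfold Q5_def, algebra)
  also have "\<dots> = (\<Sum>t\<in>FF. real_of_int (tc t)^5) + p51 * r + p52 * r^2
      + (\<Sum>t\<in>FF. 10 * of_int (ta t)^3 * of_int (tc t)^2 + 60 * normK (tb t) * of_int (ta t)^2 * of_int (tc t)
         + 30 * (normK (tb t))^2 * of_int (ta t)) * r^3
      + (\<Sum>t\<in>FF. 5 * of_int (ta t)^4 * of_int (tc t) + 20 * normK (tb t) * of_int (ta t)^3) * r^4
      + (\<Sum>t\<in>FF. real_of_int (ta t)^5) * r^5"
    unfolding p51_def p52_def by (rule sum_poly5)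
  also have "(\<Sum>t\<in>FF. 10 * of_int (ta t)^3 * of_int (tc t)^2 + 60 * normK (tb t) * of_int (ta t)^2 * of_int (tc t)
         + 30 * (normK (tb t))^2 * of_int (ta t)) = - p52"
    unfolding p52_def by (subst sum_gI) (simp add: gI_proj normK_cnj sum_negf[symmetric] algebra_simps)
  also have "(\<Sum>t\<in>FF. 5 * of_int (ta t)^4 * of_int (tc t) + 20 * normK (tb t) * of_int (ta t)^3) = - p51"
    unfolding p51_def by (subst sum_gI) (simp add: gI_proj normK_cnj sum_negf[symmetric] algebra_simps)
  also have "(\<Sum>t\<in>FF. real_of_int (ta t)^5) = - (\<Sum>t\<in>FF. real_of_int (tc t)^5)"
    by (subst sum_gI) (simp add: gI_proj sum_negf)
  finally show ?thesis by simp
qed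

lemma P5_final_radial:
  assumes rad: "\<And>z. P 5 z = (\<Sum>(a,b,c)\<in>FF. Q5 a c (normK b) ((cmod z)^2))"
  shows "P 5 z = alpha d 5 D - alpha d 5 D * (cmod z)^(2*5)"
proof -
  define al where "al = (\<Sum>t\<in>FF. real_of_int (tc t)^5)"
  have Pf: "P 5 z = al + p51 * (cmod z)^2 + p52 * ((cmod z)^2)^2 - p52 * ((cmod z)^2)^3
     - p51 * ((cmod z)^2)^4 - al * ((cmod z)^2)^5" for z
    unfolding rad Q5_sum al_def ..
  have alpha: "alpha d 5 D = al" using alpha_P[of 5] Pf[of 0] by simp
  have "P 5 (Complex 1 2) + 5^5 * P 5 (Complex (4/5) (2/5)) + 4^5 * P 5 (Complex 0 (1/2)) = 0"
    by (rule ST_2i) simp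
  then have e1: "852 * p51 + 348 * p52 = 0" unfolding Pf cm_vals by (simp add: power_divide)
  have "P 5 (Complex 1 3) + 10^5 * P 5 (Complex (9/10) (3/10)) + 9^5 * P 5 (Complex 0 (1/3)) = 0"
    by (rule ST_3i) simp
  then have e2: "20952 * p51 + 7848 * p52 = 0" unfolding Pf cm_vals by (simp add: power_divide)
  have "p51 = 0" "p52 = 0" using e1 e2 by linarith+
  then show ?thesis unfolding Pf alpha by (simp add: power_mult)
qed

lemma P3_d7_c:
  "complex_of_real (P 3 z) = (\<Sum>(a,b,c)\<in>FF. complex_of_real (Q3 a c (normK b) ((cmod z)^2))
      + 3 * (of_int a * (z * cnj z) + of_int c) * ((b * z)^2 + (cnj b * cnj z)^2))"
proof -
  have "P 3 ((-1) * z) = P 3 z" by (rule P_unit[OF m1_unit])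
  then have "complex_of_real (2 * P 3 z) = complex_of_real (P 3 z) + complex_of_real (P 3 ((-1) * z))"
    by simp
  also have "\<dots> = (\<Sum>t\<in>FF. qc t z ^ 3 + qc t ((-1) * z) ^ 3)"
    unfolding P_c sum.distrib ..
  also have "\<dots> = (\<Sum>t\<in>FF. 2 * (case t of (a,b,c) \<Rightarrow> complex_of_real (Q3 a c (normK b) ((cmod z)^2))
      + 3 * (of_int a * (z * cnj z) + of_int c) * ((b * z)^2 + (cnj b * cnj z)^2)))"
  proof (rule sum.cong)
    fix t assume "t \<in> FF"
    obtain a b c where t: "t = (a,b,c)" by (cases t) auto
    have key: "(A+X+Y)^3 + (A + (-1)*X + cnj (-1)*Y)^3 = 2*A^3 + 12*A*X*Y + 6*A*(X^2+Y^2)" for A X Y :: complex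
      using id_neg3[of A X Y] by simp
    show "qc t z ^ 3 + qc t ((-1) * z) ^ 3 = 2 * (case t of (a,b,c) \<Rightarrow> complex_of_real (Q3 a c (normK b) ((cmod z)^2))
      + 3 * (of_int a * (z * cnj z) + of_int c) * ((b * z)^2 + (cnj b * cnj z)^2))"
      unfolding t qc_expand[OF m1_unit(2)] unfolding qc_expand1 key prod.case Q3_c
      by (simp add: algebra_simps)
  qed simp
  also have "\<dots> = complex_of_real 2 * (\<Sum>(a,b,c)\<in>FF. complex_of_real (Q3 a c (normK b) ((cmod z)^2))
      + 3 * (of_int a * (z * cnj z) + of_int c) * ((b * z)^2 + (cnj b * cnj z)^2))"
    unfolding sum_distrib_left by simp
  finally show ?thesis by simp
qed

definition Bm :: complex where "Bm = (\<Sum>t\<in>FF. of_int (tc t) * (tb t)^2)"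

lemma sum_poly_c2: "(\<Sum>t\<in>S. (of_int (ta t) * r + of_int (tc t)) * ((tb t * z)^2 + (cnj (tb t) * cnj z)^2)) =
   z^2 * (r * (\<Sum>t\<in>S. of_int (ta t) * (tb t)^2) + (\<Sum>t\<in>S. of_int (tc t) * (tb t)^2))
   + (cnj z)^2 * (r * (\<Sum>t\<in>S. of_int (ta t) * (cnj (tb t))^2) + (\<Sum>t\<in>S. of_int (tc t) * (cnj (tb t))^2))"
  by (simp add: sum.distrib sum_distrib_left sum_distrib_right algebra_simps power_mult_distrib)

lemma Bpart: "(\<Sum>(a,b,c)\<in>FF. (of_int a * (z * cnj z) + of_int c) * ((b * z)^2 + (cnj b * cnj z)^2))
   = Bm * (1 - z * cnj z) * (z^2 + (cnj z)^2)"
proof -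
  have s1: "(\<Sum>t\<in>FF. of_int (ta t) * (tb t)^2) = - Bm"
  proof -
    have "(\<Sum>t\<in>FF. of_int (ta t) * (tb t)^2) = (\<Sum>t\<in>FF. - (of_int (tc t) * (cnj (tb t))^2))"
      by (subst sum_gI) (simp add: gI_proj)
    also have "\<dots> = (\<Sum>t\<in>FF. - (of_int (tc t) * (tb t)^2))"
      by (subst sum_bcnj) (simp add: bmap_proj)
    finally show ?thesis unfolding Bm_def by (simp add: sum_negf)
  qed
  have s2: "(\<Sum>t\<in>FF. of_int (ta t) * (cnj (tb t))^2) = - Bm"
    unfolding Bm_def by (subst sum_gI) (simp add: gI_proj sum_negf)
  have s3: "(\<Sum>t\<in>FF. of_int (tc t) * (cnj (tb t))^2) = Bm"
    unfolding Bm_def by (subst sum_bcnj) (simp add: bmap_proj)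
  show ?thesis unfolding sum_case3 sum_poly_c2 s1 s2 s3 Bm_def[symmetric]
    by (simp add: algebra_simps)
qed

lemma sq_cnj: "z^2 + (cnj z)^2 = complex_of_real (2 * ((Re z)^2 - (Im z)^2))"
  by (simp add: complex_eq_iff power2_eq_square)

lemma P3_d7_form:
  "complex_of_real (P 3 z) = complex_of_real ((\<Sum>t\<in>FF. real_of_int (tc t)^3) + p31 * (cmod z)^2
     - p31 * ((cmod z)^2)^2 - (\<Sum>t\<in>FF. real_of_int (tc t)^3) * ((cmod z)^2)^3)
     + 6 * Bm * complex_of_real ((1 - (cmod z)^2) * ((Re z)^2 - (Im z)^2))"
proof -
  have "complex_of_real (P 3 z) = complex_of_real (\<Sum>(a,b,c)\<in>FF. Q3 a c (normK b) ((cmod z)^2))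
     + 3 * (\<Sum>(a,b,c)\<in>FF. (of_int a * (z * cnj z) + of_int c) * ((b * z)^2 + (cnj b * cnj z)^2))"
    unfolding P3_d7_c sum_case3 of_real_sum sum.distrib sum_distrib_left
    by (intro arg_cong2[where f="(+)"] refl sum.cong) (simp_all add: algebra_simps)
  also have "\<dots> = complex_of_real (\<Sum>(a,b,c)\<in>FF. Q3 a c (normK b) ((cmod z)^2))
     + 3 * (Bm * (1 - z * cnj z) * (z^2 + (cnj z)^2))"
    unfolding Bpart ..
  finally show ?thesis unfolding Q3_sum sq_cnj complex_norm_square[symmetric]
    by (simp add: algebra_simps)
qed

lemma chain4:
  assumes k: "odd k" and b: "ba \<in> Od" "bb \<in> Od" "bc \<in> Od" "bd \<in> Od"
    and c0: "za + ba = va" "va \<noteq> 0" "va * zb = -1"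
    and c1: "zb + bb = vb" "vb \<noteq> 0" "vb * zc = -1"
    and c2: "zc + bc = vc" "vc \<noteq> 0" "vc * zd = -1"
    and c3: "zd + bd = vd" "vd \<noteq> 0" "vd * za = -1"
    and n: "(cmod va)^2 * (cmod vb)^2 * (cmod vc)^2 * (cmod vd)^2 = 1"
  shows "P k va + ((cmod va)^2)^k * P k vb + ((cmod va)^2 * (cmod vb)^2)^k * P k vc
     + ((cmod va)^2 * (cmod vb)^2 * (cmod vc)^2)^k * P k vd = 0"
proof -
  let ?n0 = "((cmod va)^2)^k" and ?n1 = "((cmod vb)^2)^k" and ?n2 = "((cmod vc)^2)^k" and ?n3 = "((cmod vd)^2)^k"
  have e0: "H d k D za = P k va + ?n0 * H d k D zb" using chain_step[OF k b(1) c0] by (simp add: power_mult)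
  have e1: "H d k D zb = P k vb + ?n1 * H d k D zc" using chain_step[OF k b(2) c1] by (simp add: power_mult)
  have e2: "H d k D zc = P k vc + ?n2 * H d k D zd" using chain_step[OF k b(3) c2] by (simp add: power_mult)
  have e3: "H d k D zd = P k vd + ?n3 * H d k D za" using chain_step[OF k b(4) c3] by (simp add: power_mult)
  have nn: "?n0 * ?n1 * ?n2 * ?n3 = 1" using n by (simp add: power_mult_distrib[symmetric])
  have "H d k D za = P k va + ?n0 * P k vb + (?n0 * ?n1) * P k vc + (?n0 * ?n1 * ?n2) * P k vd
      + (?n0 * ?n1 * ?n2 * ?n3) * H d k D za"
    using e0 e1 e2 e3 by (simp add: algebra_simps)
  then show ?thesis using nn by (simp add: power_mult_distrib)
qed

lemma cm7: "(cmod (Complex p (q * sqrt 7)))^2 = p^2 + 7 * q^2"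
  unfolding cmod_power2 by (simp add: power_mult_distrib)

lemma d7_final:
  assumes d7: "d = 7"
  shows "P 3 z = alpha d 3 D - alpha d 3 D * (cmod z)^(2*3)"
proof -
  define al where "al = (\<Sum>t\<in>FF. real_of_int (tc t)^3)"
  define RP where "RP z = al + p31 * (cmod z)^2 - p31 * ((cmod z)^2)^2 - al * ((cmod z)^2)^3" for z
  define CB where "CB z = 6 * ((1 - (cmod z)^2) * ((Re z)^2 - (Im z)^2))" for z
  have form: "complex_of_real (P 3 z) = complex_of_real (RP z) + Bm * complex_of_real (CB z)" for z
    unfolding P3_d7_form RP_def CB_def al_def by (simp add: algebra_simps)
  have alpha: "alpha d 3 D = al"
  proof -
    have "complex_of_real (alpha d 3 D) = complex_of_real al"
      using alpha_P[of 3] form[of 0] by (simp add: RP_def CB_def)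
    then show ?thesis by simp
  qed
  have wdef: "w = Complex (1/2) (sqrt 7 / 2)" using d7 by (simp add: omega_d_def complex_eq_iff)
  have O2: "1 - w \<in> Od" using O_diff[OF one_O O_w] .
  have s7: "sqrt 7 * sqrt 7 = (7::real)" by simp
  let ?va = "Complex (1/2) (3/2 * sqrt 7)" and ?vb = "Complex (15/32) ((-13/32) * sqrt 7)"
    and ?vc = "Complex (7/44) (9/44 * sqrt 7)" and ?vd = "Complex 0 (1/7 * sqrt 7)"
  have cva: "(cmod ?va)^2 = 16" using cm7[of "1/2" "3/2"] by (simp add: power_divide)
  have cvb: "(cmod ?vb)^2 = 11/8" using cm7[of "15/32" "-13/32"] by (simp add: power_divide)
  have cvc: "(cmod ?vc)^2 = 7/22" using cm7[of "7/44" "9/44"] by (simp add: power_divide)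
  have cvd: "(cmod ?vd)^2 = 1/7" using cm7[of "0" "1/7"] by (simp add: power_divide)
  have "P 3 ?va + ((cmod ?va)^2)^3 * P 3 ?vb + ((cmod ?va)^2 * (cmod ?vb)^2)^3 * P 3 ?vc
     + ((cmod ?va)^2 * (cmod ?vb)^2 * (cmod ?vc)^2)^3 * P 3 ?vd = 0"
  proof (rule chain4[where za="Complex 0 (sqrt 7)" and zb="Complex (-1/32) (3/32 * sqrt 7)"
        and zc="Complex (-15/44) ((-13/44) * sqrt 7)" and zd="Complex (-1/2) (9/14 * sqrt 7)", OF _ O_w O2 O_w O2])
    show "odd (3::nat)" by simp
    show "(cmod ?va)^2 * (cmod ?vb)^2 * (cmod ?vc)^2 * (cmod ?vd)^2 = 1"
      unfolding cva cvb cvc cvd by simp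
  qed (simp_all add: wdef complex_eq_iff field_simps s7 Complex_eq_0)
  then have eqM: "P 3 ?va + 4096 * P 3 ?vb + 10648 * P 3 ?vc + 343 * P 3 ?vd = 0"
    unfolding cva cvb cvc cvd by simp
  have "P 3 (Complex 1 2) + 5^3 * P 3 (Complex (4/5) (2/5)) + 4^3 * P 3 (Complex 0 (1/2)) = 0"
    by (rule ST_2i) simp
  then have eqS: "P 3 (Complex 1 2) + 125 * P 3 (Complex (4/5) (2/5)) + 64 * P 3 (Complex 0 (1/2)) = 0"
    by simp
  have rM: "RP ?va + 4096 * RP ?vb + 10648 * RP ?vc + 343 * RP ?vd = 0"
    unfolding RP_def cva cvb cvc cvd by (simp add: power_divide algebra_simps)
  have cM: "CB ?va + 4096 * CB ?vb + 10648 * CB ?vc + 343 * CB ?vd = -1890"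
    unfolding CB_def cva cvb cvc cvd by (simp add: power_divide power_mult_distrib)
  have "complex_of_real (RP ?va + 4096 * RP ?vb + 10648 * RP ?vc + 343 * RP ?vd)
      + Bm * complex_of_real (CB ?va + 4096 * CB ?vb + 10648 * CB ?vc + 343 * CB ?vd) = 0"
  proof -
    have "complex_of_real (P 3 ?va + 4096 * P 3 ?vb + 10648 * P 3 ?vc + 343 * P 3 ?vd) = 0"
      using eqM by simp
    then show ?thesis unfolding of_real_add of_real_mult form by (simp add: algebra_simps)
  qed
  then have B0: "Bm = 0" unfolding rM cM by simp
  have "complex_of_real (P 3 (Complex 1 2) + 125 * P 3 (Complex (4/5) (2/5)) + 64 * P 3 (Complex 0 (1/2)))
     = complex_of_real (RP (Complex 1 2) + 125 * RP (Complex (4/5) (2/5)) + 64 * RP (Complex 0 (1/2)))"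
    unfolding of_real_add of_real_mult form B0 by simp
  then have "RP (Complex 1 2) + 125 * RP (Complex (4/5) (2/5)) + 64 * RP (Complex 0 (1/2)) = 0"
    using eqS of_real_eq_iff by fastforce
  then have "p31 = 0" unfolding RP_def cm_vals by (simp add: power_divide)
  then have "P 3 z = RP z" using form[of z] B0 of_real_eq_iff by fastforce
  then show ?thesis unfolding alpha RP_def \<open>p31 = 0\<close> by (simp add: power_mult)
qed

lemma main:
  "(\<forall>z. H d 1 D z = alpha d 1 D)
    \<and> (d \<in> {1, 3, 7} \<longrightarrow> (\<forall>z. H d 3 D z = alpha d 3 D))
    \<and> (d = 3 \<longrightarrow> (\<forall>z. H d 5 D z = alpha d 5 D))"
proof (intro conjI impI allI)
  fix z
  show "H d 1 D z = alpha d 1 D" by (rule H_const[of 1, OF _ P1_final]) simp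
next
  fix z assume d: "d \<in> {1, 3, 7}"
  have Pg: "P 3 x = alpha d 3 D - alpha d 3 D * (cmod x)^(2*3)" for x
  proof -
    consider "d = 1" | "d = 3" | "d = 7" using d by auto
    then show ?thesis
    proof cases
      case 1 then show ?thesis using P3_final_radial P3_d1 by blast
    next
      case 2 then show ?thesis using P3_final_radial P3_d3 by blast
    next
      case 3 then show ?thesis using d7_final by blast
    qed
  qed
  show "H d 3 D z = alpha d 3 D" by (rule H_const) (simp_all add: Pg)
next
  fix z assume d: "d = 3"
  have Pg: "P 5 x = alpha d 5 D - alpha d 5 D * (cmod x)^(2*5)" for x
    using P5_final_radial P5_d3[OF d] by blast
  show "H d 5 D z = alpha d 5 D" by (rule H_const) (simp_all add: Pg)
qed

end

theorem theorem1p2: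
  fixes d :: nat and \<Delta> :: int
  assumes "d \<in> {1, 2, 3, 7, 11}"
    and "\<Delta> > 0"
    and "\<not> (\<exists>\<beta> \<in> O_d d. normK \<beta> = real_of_int \<Delta>)"
  shows "(\<forall>z. H d 1 \<Delta> z = alpha d 1 \<Delta>)
    \<and> (d \<in> {1, 3, 7} \<longrightarrow> (\<forall>z. H d 3 \<Delta> z = alpha d 3 \<Delta>))
    \<and> (d = 3 \<longrightarrow> (\<forall>z. H d 5 \<Delta> z = alpha d 5 \<Delta>))"
proof -
  interpret setting d \<Delta> using assms by unfold_locales
  show ?thesis by (rule main)
qed

end
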